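(* Let $n$ be even, and for $m\ge1$ let $\mathcal{C}_m=\mathbb{C}\{e_1,\dots,e_m\}$ denote the complex Clifford algebra with generators satisfying $e_j^2=-1$, $e_je_k=-e_ke_j$ ($j\ne k$), of dimension $2^m$, with $\mathcal{C}_n\subset\mathcal{C}_{n+1}$ naturally. Suppose there is an invertible $2^{n/2}\times2^{n/2}$ matrix $P_n$ over $\mathcal{C}_n$, not depending on $a$, such that for every $a\in\mathcal{C}_n$ the matrix $\phi_n(a):=P_n(aI_{2^{n/2}})P_n^{-1}$ has all entries in $\mathbb{C}$. Let $e_{[n+1]}=e_1e_2\cdots e_{n+1}$ and $r=(-1)^{\frac12(n+1)(n+2)}$, so that $e_{[n+1]}^2=r$, and fix a square root $\sqrt r\in\mathbb{C}$. Then every $a\in\mathcal{C}_{n+1}$ can be written as $a=a_0+a_1e_{[n+1]}=a_0+e_{[n+1]}a_1$ with $a_0,a_1\in\mathcal{C}_n$. Define $\overline{a}=a_0-a_1e_{[n+1]}$ and $D_a=\mathrm{diag}(aI_{2^{n/2}},\overline{a}I_{2^{n/2}})$. Let $$P_{n+1}=\frac12\begin{pmatrix}(1+\frac{1}{\sqrt r}e_{[n+1]})P_n & -(\sqrt r-e_{[n+1]})P_n\\ \frac1r(\sqrt r-e_{[n+1]})P_n & (1+\frac{1}{\sqrt r}e_{[n+1]})P_n\end{pmatrix},$$ $$P_{n+1}'=\frac12\begin{pmatrix}P_n^{-1}(1+\frac{1}{\sqrt r}e_{[n+1]}) & P_n^{-1}(\sqrt r-e_{[n+1]})\\ -P_n^{-1}\frac1r(\sqrt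 r-e_{[n+1]}) & P_n^{-1}(1+\frac1{\sqrt r}e_{[n+1]})\end{pmatrix}.$$ Then $P_{n+1}$ is invertible with $P_{n+1}^{-1}=P_{n+1}'$, and $$P_{n+1}D_aP_{n+1}^{-1}=\begin{pmatrix}\phi_n(a_0)+\sqrt r\,\phi_n(a_1) & 0\\ 0 & \phi_n(a_0)-\sqrt r\,\phi_n(a_1)\end{pmatrix},$$ a block diagonal matrix with two $2^{n/2}\times2^{n/2}$ complex blocks.
   Context: For an element $c$ and a matrix $M$, $cM$ (resp. $Mc$) denotes the matrix with entries $cM_{jk}$ (resp. $M_{jk}c$). Complex scalars commute with all Clifford elements. *)

theory Defs
  imports Complex_Main
begin

text \<open>An element is a coefficient
  function on finite sets of generator indices: a = sum_A a(A) e_A, where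
  e_A = e_(i1) ... e_(ik) for A = {i1 < ... < ik}.  The algebra C_m is the
  subspace of elements supported on subsets of {1..m}; hence C_n is contained
  in C_(n+1) naturally.\<close>

type_synonym cl = "nat set \<Rightarrow> complex"

definition cl_in :: "nat \<Rightarrow> cl \<Rightarrow> bool" where
  "cl_in m a \<longleftrightarrow> (\<forall>A. a A \<noteq> 0 \<longrightarrow> A \<subseteq> {1..m})"

text \<open>sign in e_A e_B = sign(A,B) e_(A symdiff B)\<close>
definition cl_sign :: "nat set \<Rightarrow> nat set \<Rightarrow> complex" where
  "cl_sign A B = (-1) ^ (card {(i, j). i \<in> A \<and> j \<in> B \<and> j < i} + card (A \<inter> B))"

definition cl_mul :: "cl \<Rightarrow> cl \<Rightarrow> cl" where
  "cl_mul a b = (\<lambda>S. \<Sum>A\<in>{A. a A \<noteq> 0}. \<Sum>B\<in>{B. b B \<noteq> 0}.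
      if (A - B) \<union> (B - A) = S then cl_sign A B * a A * b B else 0)"

definition cl_add :: "cl \<Rightarrow> cl \<Rightarrow> cl" where
  "cl_add a b = (\<lambda>S. a S + b S)"

definition cl_minus :: "cl \<Rightarrow> cl \<Rightarrow> cl" where
  "cl_minus a b = (\<lambda>S. a S - b S)"

definition cl_neg :: "cl \<Rightarrow> cl" where
  "cl_neg a = (\<lambda>S. - a S)"

definition cl_smul :: "complex \<Rightarrow> cl \<Rightarrow> cl" where
  "cl_smul c a = (\<lambda>S. c * a S)"

definition cl_scal :: "complex \<Rightarrow> cl" where
  "cl_scal c = (\<lambda>S. if S = {} then c else 0)"

definition cl_zero :: cl where "cl_zero = cl_scal 0"
definition cl_one :: cl where "cl_one = cl_scal 1"

definition cl_is_scalar :: "cl \<Rightarrow> bool" where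
  "cl_is_scalar a \<longleftrightarrow> (\<exists>c. a = cl_scal c)"

definition cl_gen :: "nat \<Rightarrow> cl" where
  "cl_gen j = (\<lambda>S. if S = {j} then 1 else 0)"

definition cl_top :: "nat \<Rightarrow> cl" where
  "cl_top m = foldr cl_mul (map cl_gen [1..<m+1]) cl_one"

text \<open>Square matrices over the Clifford algebra, as functions of row/column index;
  only indices < N are meaningful.\<close>
type_synonym clmat = "nat \<Rightarrow> nat \<Rightarrow> cl"

definition mat_mul :: "nat \<Rightarrow> clmat \<Rightarrow> clmat \<Rightarrow> clmat" where
  "mat_mul N A B = (\<lambda>i j S. \<Sum>k<N. cl_mul (A i k) (B k j) S)"

definition mat_eq :: "nat \<Rightarrow> clmat \<Rightarrow> clmat \<Rightarrow> bool" where
  "mat_eq N A B \<longleftrightarrow> (\<forall>i<N. \<forall>j<N. A i j = B i j)"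

definition mat_over :: "nat \<Rightarrow> nat \<Rightarrow> clmat \<Rightarrow> bool" where
  "mat_over m N A \<longleftrightarrow> (\<forall>i<N. \<forall>j<N. cl_in m (A i j))"

definition mat_diag_const :: "cl \<Rightarrow> clmat" where
  "mat_diag_const a = (\<lambda>i j. if i = j then a else cl_zero)"

definition mat_id :: clmat where "mat_id = mat_diag_const cl_one"
definition mat_zero :: clmat where "mat_zero = (\<lambda>i j. cl_zero)"

definition mat_lmul :: "cl \<Rightarrow> clmat \<Rightarrow> clmat" where
  "mat_lmul c M = (\<lambda>i j. cl_mul c (M i j))"
definition mat_rmul :: "clmat \<Rightarrow> cl \<Rightarrow> clmat" where
  "mat_rmul M c = (\<lambda>i j. cl_mul (M i j) c)"

definition mat_smul :: "complex \<Rightarrow> clmat \<Rightarrow> clmat" where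
  "mat_smul z M = (\<lambda>i j. cl_smul z (M i j))"
definition mat_add :: "clmat \<Rightarrow> clmat \<Rightarrow> clmat" where
  "mat_add A B = (\<lambda>i j. cl_add (A i j) (B i j))"
definition mat_minus :: "clmat \<Rightarrow> clmat \<Rightarrow> clmat" where
  "mat_minus A B = (\<lambda>i j. cl_minus (A i j) (B i j))"
definition mat_neg :: "clmat \<Rightarrow> clmat" where
  "mat_neg A = (\<lambda>i j. cl_neg (A i j))"

definition mat_block :: "nat \<Rightarrow> clmat \<Rightarrow> clmat \<Rightarrow> clmat \<Rightarrow> clmat \<Rightarrow> clmat" where
  "mat_block N A B C D = (\<lambda>i j.
     if i < N then (if j < N then A i j else B i (j - N))
     else (if j < N then C (i - N) j else D (i - N) (j - N)))"

end

theory Submission imports Defs "HOL-Library.Function_Algebras" begin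

lemma fun_sum_apply: "(\<Sum>k\<in>K. f k) x = (\<Sum>k\<in>K. f k x)"
  by (induction K rule: infinite_finite_induct) auto

lemma sum_lessThan_add_split:
  "(\<Sum>k<m+(n::nat). f k) = (\<Sum>k<m. f k) + (\<Sum>k<n. f (k + m))"
  by (induction n) (auto simp: add.commute add.left_commute)

definition sd :: "'a set \<Rightarrow> 'a set \<Rightarrow> 'a set" where
  "sd A B = (A - B) \<union> (B - A)"

definition pr :: "nat set \<Rightarrow> nat set \<Rightarrow> (nat \<times> nat) set" where
  "pr A B = {(i, j). i \<in> A \<and> j \<in> B \<and> j < i}"

lemma sd_eq_iff: "(sd A B = S) \<longleftrightarrow> B = sd A S"
  unfolding sd_def by auto

lemma sd_sd[simp]: "sd A (sd A B) = B" unfolding sd_def by auto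

lemma cl_sign_pr: "cl_sign A B = (-1) ^ card (pr A B) * (-1) ^ card (A \<inter> B)"
  unfolding cl_sign_def pr_def by (simp add: power_add)

lemma finite_pr: "finite A \<Longrightarrow> finite B \<Longrightarrow> finite (pr A B)"
  unfolding pr_def by (rule finite_subset[of _ "A \<times> B"]) auto

lemma card_split: "finite X \<Longrightarrow> card X = card (X - Y) + card (X \<inter> Y)"
proof -
  assume f: "finite X"
  have "X = (X - Y) \<union> (X \<inter> Y)" by auto
  hence "card X = card ((X - Y) \<union> (X \<inter> Y))" by simp
  also have "\<dots> = card (X - Y) + card (X \<inter> Y)"
    by (rule card_Un_disjoint) (use f in auto)
  finally show ?thesis .
qed

lemma card_sd_parity:
  assumes "finite X" "finite Y"
  shows "(-1::complex) ^ card (sd X Y) = (-1) ^ card X * (-1) ^ card Y"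
proof -
  have 1: "card X = card (X - Y) + card (X \<inter> Y)" using assms card_split by blast
  have 2: "card Y = card (Y - X) + card (X \<inter> Y)" using assms card_split[of Y X] by (simp add: Int_commute)
  have 3: "card (sd X Y) = card (X - Y) + card (Y - X)"
    unfolding sd_def by (rule card_Un_disjoint) (use assms in auto)
  have "(-1::complex) ^ card X * (-1) ^ card Y = (-1) ^ card (sd X Y) * ((-1) ^ card (X \<inter> Y))^2"
    unfolding 1 2 3 by (simp add: power_add power2_eq_square)
  also have "((-1::complex) ^ card (X \<inter> Y))^2 = 1" by (simp add: power_even_eq[symmetric] flip: power_mult)
  finally show ?thesis by simp
qed

lemma pr_sd_left: "pr (sd A B) C = sd (pr A C) (pr B C)"
  unfolding pr_def sd_def by auto
lemma pr_sd_right: "pr A (sd B C) = sd (pr A B) (pr A C)"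
  unfolding pr_def sd_def by auto
lemma int_sd_left: "(sd A B) \<inter> C = sd (A \<inter> C) (B \<inter> C)"
  unfolding sd_def by auto
lemma int_sd_right: "A \<inter> (sd B C) = sd (A \<inter> B) (A \<inter> C)"
  unfolding sd_def by auto

lemma sign_sd_left:
  assumes "finite A" "finite B" "finite C"
  shows "cl_sign (sd A B) C = cl_sign A C * cl_sign B C"
  unfolding cl_sign_pr pr_sd_left int_sd_left
  using assms by (simp add: card_sd_parity finite_pr)

lemma sign_sd_right:
  assumes "finite A" "finite B" "finite C"
  shows "cl_sign A (sd B C) = cl_sign A B * cl_sign A C"
  unfolding cl_sign_pr pr_sd_right int_sd_right
  using assms by (simp add: card_sd_parity finite_pr)

lemma sign_cocycle:
  assumes "finite A" "finite B" "finite C"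
  shows "cl_sign (sd A B) C * cl_sign A B = cl_sign A (sd B C) * cl_sign B C"
  using assms by (simp add: sign_sd_left sign_sd_right)


lemma cl_in_out: "cl_in M a \<Longrightarrow> \<not> A \<subseteq> {1..M} \<Longrightarrow> a A = 0"
  unfolding cl_in_def by blast

lemma cl_in_supp_fin: "cl_in M a \<Longrightarrow> finite {A. a A \<noteq> 0}"
  unfolding cl_in_def by (rule finite_subset[of _ "Pow {1..M}"]) auto

lemma mul_formula:
  assumes "cl_in M a" "cl_in M b"
  shows "cl_mul a b S = (\<Sum>A\<in>Pow {1..M}. cl_sign A (sd A S) * a A * b (sd A S))"
proof -
  have fb: "finite {B. b B \<noteq> 0}" using cl_in_supp_fin[OF assms(2)] .
  have fa: "finite {A. a A \<noteq> 0}" using cl_in_supp_fin[OF assms(1)] .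
  have inner: "(\<Sum>B\<in>{B. b B \<noteq> 0}. if (A - B) \<union> (B - A) = S then cl_sign A B * a A * b B else 0)
      = cl_sign A (sd A S) * a A * b (sd A S)" for A
  proof -
    have "(\<Sum>B\<in>{B. b B \<noteq> 0}. if (A - B) \<union> (B - A) = S then cl_sign A B * a A * b B else 0)
       = (\<Sum>B\<in>{B. b B \<noteq> 0}. if B = sd A S then cl_sign A B * a A * b B else 0)"
      by (rule sum.cong) (auto simp: sd_eq_iff[unfolded sd_def, symmetric] sd_def)
    also have "\<dots> = cl_sign A (sd A S) * a A * b (sd A S)"
      using fb by (simp add: sum.delta')
    finally show ?thesis .
  qed
  have "cl_mul a b S = (\<Sum>A\<in>{A. a A \<noteq> 0}. cl_sign A (sd A S) * a A * b (sd A S))"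
    unfolding cl_mul_def by (simp only: inner)
  also have "\<dots> = (\<Sum>A\<in>Pow {1..M}. cl_sign A (sd A S) * a A * b (sd A S))"
    by (rule sum.mono_neutral_left) (use assms in \<open>auto simp: cl_in_def\<close>)
  finally show ?thesis .
qed

lemma sd_in_U: "A \<in> Pow {1..M} \<Longrightarrow> B \<in> Pow {1..M} \<Longrightarrow> sd A B \<in> Pow {1..M}"
  unfolding sd_def by auto

lemma sd_sub: "A \<subseteq> X \<Longrightarrow> B \<subseteq> X \<Longrightarrow> sd A B \<subseteq> X" unfolding sd_def by auto

lemma sd_mem: "x \<in> sd A B \<Longrightarrow> x \<in> A \<or> x \<in> B" unfolding sd_def by auto

lemma mul_closed: assumes "cl_in M a" "cl_in M b" shows "cl_in M (cl_mul a b)"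
  unfolding cl_in_def
proof (intro allI impI)
  fix S assume "cl_mul a b S \<noteq> 0"
  then obtain A where A: "A \<in> Pow {1..M}" "cl_sign A (sd A S) * a A * b (sd A S) \<noteq> 0"
    unfolding mul_formula[OF assms] using sum.not_neutral_contains_not_neutral by blast
  hence "sd A S \<subseteq> {1..M}" using assms(2) cl_in_def by auto
  with A(1) show "S \<subseteq> {1..M}" unfolding sd_def by auto
qed

lemma add_closed: assumes "cl_in M a" "cl_in M b" shows "cl_in M (a + b)"
  unfolding cl_in_def
proof (intro allI impI)
  fix A assume "(a + b) A \<noteq> 0"
  hence "a A \<noteq> 0 \<or> b A \<noteq> 0" by auto
  thus "A \<subseteq> {1..M}" using assms cl_in_def by blast
qed
lemma diff_closed: assumes "cl_in M a" "cl_in M b" shows "cl_in M (a - b)"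
  unfolding cl_in_def
proof (intro allI impI)
  fix A assume "(a - b) A \<noteq> 0"
  hence "a A \<noteq> 0 \<or> b A \<noteq> 0" by auto
  thus "A \<subseteq> {1..M}" using assms cl_in_def by blast
qed
lemma neg_closed: "cl_in M a \<Longrightarrow> cl_in M (- a)"
  unfolding cl_in_def by auto
lemma zero_closed: "cl_in M 0"
  unfolding cl_in_def by auto
lemma smul_closed: "cl_in M a \<Longrightarrow> cl_in M (cl_smul z a)"
  unfolding cl_in_def cl_smul_def by auto
lemma scal_closed: "cl_in M (cl_scal z)"
  unfolding cl_in_def cl_scal_def by auto
lemma sum_closed: "(\<And>k. k \<in> K \<Longrightarrow> cl_in M (f k)) \<Longrightarrow> cl_in M (\<Sum>k\<in>K. f k)"
  by (induction K rule: infinite_finite_induct) (auto intro: add_closed zero_closed)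
lemma cl_in_mono: "cl_in n a \<Longrightarrow> n \<le> M \<Longrightarrow> cl_in M a"
  unfolding cl_in_def by fastforce

lemma cl_add_eq: "cl_add a b = a + b" unfolding cl_add_def by auto
lemma cl_minus_eq: "cl_minus a b = a - b" unfolding cl_minus_def by auto
lemma cl_neg_eq: "cl_neg a = - a" unfolding cl_neg_def by auto
lemma cl_zero_eq: "cl_zero = 0" unfolding cl_zero_def cl_scal_def by auto

lemma mul_zero_left[simp]: "cl_mul 0 b = 0" unfolding cl_mul_def by auto
lemma mul_zero_right[simp]: "cl_mul a 0 = 0" unfolding cl_mul_def by auto

lemma mul_add_left: assumes "cl_in M a" "cl_in M a'" "cl_in M b" shows
   "cl_mul (a + a') b = cl_mul a b + cl_mul a' b"
  by (rule ext) (simp only: mul_formula[of M] add_closed assms plus_fun_apply, simp add: sum.distrib[symmetric] ring_distribs)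
lemma mul_add_right: assumes "cl_in M a" "cl_in M b" "cl_in M b'" shows
   "cl_mul a (b + b') = cl_mul a b + cl_mul a b'"
  by (rule ext) (simp only: mul_formula[of M] add_closed assms plus_fun_apply, simp add: sum.distrib[symmetric] ring_distribs)
lemma mul_neg_left: assumes "cl_in M a" "cl_in M b" shows "cl_mul (- a) b = - cl_mul a b"
  by (rule ext) (simp only: mul_formula[of M] neg_closed assms uminus_apply, simp add: sum_negf[symmetric])
lemma mul_neg_right: assumes "cl_in M a" "cl_in M b" shows "cl_mul a (- b) = - cl_mul a b"
  by (rule ext) (simp only: mul_formula[of M] neg_closed assms uminus_apply, simp add: sum_negf[symmetric])
lemma mul_diff_left: assumes "cl_in M a" "cl_in M a'" "cl_in M b" shows
   "cl_mul (a - a') b = cl_mul a b - cl_mul a' b"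
  by (rule ext) (simp only: mul_formula[of M] diff_closed assms minus_apply, simp add: sum_subtractf[symmetric] ring_distribs)
lemma mul_diff_right: assumes "cl_in M a" "cl_in M b" "cl_in M b'" shows
   "cl_mul a (b - b') = cl_mul a b - cl_mul a b'"
  by (rule ext) (simp only: mul_formula[of M] diff_closed assms minus_apply, simp add: sum_subtractf[symmetric] ring_distribs)
lemma cl_smul_apply: "cl_smul z a S = z * a S" unfolding cl_smul_def ..
lemma mul_smul_left: assumes "cl_in M a" "cl_in M b" shows
   "cl_mul (cl_smul z a) b = cl_smul z (cl_mul a b)"
  by (rule ext) (simp only: mul_formula[of M] smul_closed assms cl_smul_apply, simp add: sum_distrib_left mult_ac)
lemma mul_smul_right: assumes "cl_in M a" "cl_in M b" shows
   "cl_mul a (cl_smul z b) = cl_smul z (cl_mul a b)"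
  by (rule ext) (simp only: mul_formula[of M] smul_closed assms cl_smul_apply, simp add: sum_distrib_left mult_ac)

lemma mul_sum_left:
  assumes "cl_in M b" "\<And>k. k \<in> K \<Longrightarrow> cl_in M (f k)"
  shows "cl_mul (\<Sum>k\<in>K. f k) b = (\<Sum>k\<in>K. cl_mul (f k) b)"
  using assms(2)
proof (induction K rule: infinite_finite_induct)
  case (insert x F)
  have "cl_mul (sum f (insert x F)) b = cl_mul (f x + sum f F) b" using insert(1,2) by (subst sum.insert) auto
  also have "\<dots> = cl_mul (f x) b + cl_mul (sum f F) b"
    by (rule mul_add_left[of M]) (use insert assms in \<open>auto intro: sum_closed\<close>)
  also have "\<dots> = (\<Sum>k\<in>insert x F. cl_mul (f k) b)" using insert by simp
  finally show ?case .
qed auto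

lemma mul_sum_right:
  assumes "cl_in M b" "\<And>k. k \<in> K \<Longrightarrow> cl_in M (f k)"
  shows "cl_mul b (\<Sum>k\<in>K. f k) = (\<Sum>k\<in>K. cl_mul b (f k))"
  using assms(2)
proof (induction K rule: infinite_finite_induct)
  case (insert x F)
  have "cl_mul b (sum f (insert x F)) = cl_mul b (f x + sum f F)" using insert(1,2) by (subst sum.insert) auto
  also have "\<dots> = cl_mul b (f x) + cl_mul b (sum f F)"
    by (rule mul_add_right[of M]) (use insert assms in \<open>auto intro: sum_closed\<close>)
  also have "\<dots> = (\<Sum>k\<in>insert x F. cl_mul b (f k))" using insert by simp
  finally show ?case .
qed auto

lemma sign_empty_left[simp]: "cl_sign {} S = 1" unfolding cl_sign_def by simp
lemma sign_empty_right[simp]: "cl_sign S {} = 1" unfolding cl_sign_def by simp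

lemma mul_scal_left: assumes "cl_in M a" shows "cl_mul (cl_scal z) a = cl_smul z a"
proof (rule ext)
  fix S
  have "cl_mul (cl_scal z) a S = (\<Sum>A\<in>Pow {1..M}. if A = {} then z * a S else 0)"
    unfolding mul_formula[OF scal_closed assms] by (rule sum.cong) (auto simp: cl_scal_def sd_def)
  also have "\<dots> = z * a S" by (simp add: sum.delta')
  finally show "cl_mul (cl_scal z) a S = cl_smul z a S" by (simp add: cl_smul_def)
qed

lemma mul_scal_right: assumes "cl_in M a" shows "cl_mul a (cl_scal z) = cl_smul z a"
proof (rule ext)
  fix S
  have "cl_mul a (cl_scal z) S = (\<Sum>A\<in>Pow {1..M}. if A = S then z * a S else 0)"
    unfolding mul_formula[OF assms scal_closed] 
    by (rule sum.cong) (auto simp: cl_scal_def sd_def)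
  also have "\<dots> = z * a S" using cl_in_out[OF assms] by (simp add: sum.delta')
  finally show "cl_mul a (cl_scal z) S = cl_smul z a S" by (simp add: cl_smul_def)
qed

lemma mul_assoc:
  assumes a: "cl_in M a" and b: "cl_in M b" and c: "cl_in M c"
  shows "cl_mul (cl_mul a b) c = cl_mul a (cl_mul b c)"
proof (rule ext)
  fix S
  define U where "U = Pow {1..M}"
  have fU: "finite U" unfolding U_def by simp
  have "cl_mul (cl_mul a b) c S = (\<Sum>D\<in>U. cl_sign D (sd D S) *
       (\<Sum>A\<in>U. cl_sign A (sd A D) * a A * b (sd A D)) * c (sd D S))"
    unfolding U_def mul_formula[OF mul_closed[OF a b] c] mul_formula[OF a b] ..
  also have "\<dots> = (\<Sum>D\<in>U. \<Sum>A\<in>U. cl_sign D (sd D S) *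
       (cl_sign A (sd A D) * a A * b (sd A D)) * c (sd D S))"
    by (simp add: sum_distrib_left sum_distrib_right)
  also have "\<dots> = (\<Sum>A\<in>U. \<Sum>D\<in>U. cl_sign D (sd D S) *
       (cl_sign A (sd A D) * a A * b (sd A D)) * c (sd D S))"
    by (rule sum.swap)
  also have "\<dots> = (\<Sum>A\<in>U. \<Sum>B\<in>U. cl_sign (sd A B) (sd (sd A B) S) *
       (cl_sign A B * a A * b B) * c (sd (sd A B) S))"
  proof (rule sum.cong[OF refl])
    fix A assume A: "A \<in> U"
    show "(\<Sum>D\<in>U. cl_sign D (sd D S) * (cl_sign A (sd A D) * a A * b (sd A D)) * c (sd D S)) =
          (\<Sum>B\<in>U. cl_sign (sd A B) (sd (sd A B) S) * (cl_sign A B * a A * b B) * c (sd (sd A B) S))"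
      by (rule sum.reindex_bij_witness[of _ "sd A" "sd A"]) (use A in \<open>simp_all add: U_def sd_sub\<close>)
  qed
  also have "\<dots> = (\<Sum>A\<in>U. \<Sum>B\<in>U. cl_sign A (sd A S) * a A *
       (cl_sign B (sd B (sd A S)) * b B * c (sd B (sd A S))))"
  proof (intro sum.cong refl)
    fix A B assume A: "A \<in> U" and B: "B \<in> U"
    define C where "C = sd B (sd A S)"
    have C1: "sd (sd A B) S = C" unfolding C_def sd_def by auto
    have C2: "sd B C = sd A S" unfolding C_def by simp
    show "cl_sign (sd A B) (sd (sd A B) S) * (cl_sign A B * a A * b B) * c (sd (sd A B) S) =
          cl_sign A (sd A S) * a A * (cl_sign B (sd B (sd A S)) * b B * c (sd B (sd A S)))"
    proof (cases "c C = 0")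
      case True thus ?thesis unfolding C1 C_def[symmetric] by simp
    next
      case False
      hence "C \<subseteq> {1..M}" using c cl_in_def by blast
      hence fC: "finite C" using finite_subset by blast
      have fA: "finite A" "finite B" using A B unfolding U_def using finite_subset by auto
      have eq: "cl_sign (sd A B) C * cl_sign A B = cl_sign A (sd A S) * cl_sign B C"
        using sign_cocycle[OF fA fC] C2 by simp
      have "cl_sign (sd A B) C * (cl_sign A B * a A * b B) * c C
          = (cl_sign (sd A B) C * cl_sign A B) * (a A * b B * c C)" by (simp add: mult_ac)
      also have "\<dots> = (cl_sign A (sd A S) * cl_sign B C) * (a A * b B * c C)" by (simp only: eq)
      also have "\<dots> = cl_sign A (sd A S) * a A * (cl_sign B C * b B * c C)" by (simp add: mult_ac)
      finally show ?thesis by (simp only: C1 C_def[symmetric])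
    qed
  qed
  also have "\<dots> = (\<Sum>A\<in>U. cl_sign A (sd A S) * a A *
       (\<Sum>B\<in>U. cl_sign B (sd B (sd A S)) * b B * c (sd B (sd A S))))"
    by (simp add: sum_distrib_left)
  also have "\<dots> = cl_mul a (cl_mul b c) S"
    unfolding U_def mul_formula[OF a mul_closed[OF b c]] mul_formula[OF b c] ..
  finally show "cl_mul (cl_mul a b) c S = cl_mul a (cl_mul b c) S" .
qed


definition bas :: "nat set \<Rightarrow> cl" where "bas A = (\<lambda>S. if S = A then 1 else 0)"

lemma bas_mul: "cl_mul (bas A) (bas B) = (\<lambda>S. if sd A B = S then cl_sign A B else 0)"
proof -
  have 1: "{X. bas A X \<noteq> 0} = {A}" "{X. bas B X \<noteq> 0} = {B}" by (auto simp: bas_def)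
  show ?thesis unfolding cl_mul_def 1 by (auto simp: bas_def sd_def)
qed

lemma cl_one_bas: "cl_one = bas {}" unfolding cl_one_def cl_scal_def bas_def by auto
lemma cl_gen_bas: "cl_gen j = bas {j}" unfolding cl_gen_def bas_def by auto

lemma foldr_gen: "foldr cl_mul (map cl_gen [k..<Suc m]) cl_one = bas {k..m}"
proof (induction "Suc m - k" arbitrary: k)
  case 0
  hence "[k..<Suc m] = []" "{k..m} = {}" by auto
  thus ?case by (simp add: cl_one_bas)
next
  case (Suc d)
  hence km: "k < Suc m" by simp
  hence up: "[k..<Suc m] = k # [Suc k..<Suc m]" by (simp add: upt_conv_Cons)
  have IH: "foldr cl_mul (map cl_gen [Suc k..<Suc m]) cl_one = bas {Suc k..m}"
    using Suc by simp
  have sdk: "sd {k} {Suc k..m} = {k..m}" using km unfolding sd_def by auto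
  have pr0: "pr {k} {Suc k..m} = {}" unfolding pr_def by auto
  have sg: "cl_sign {k} {Suc k..m} = 1" unfolding cl_sign_pr pr0 by simp
  have "foldr cl_mul (map cl_gen [k..<Suc m]) cl_one = cl_mul (cl_gen k) (foldr cl_mul (map cl_gen [Suc k..<Suc m]) cl_one)"
    unfolding up by (simp del: upt_Suc)
  also have "\<dots> = bas {k..m}" unfolding IH cl_gen_bas bas_mul sdk sg by (auto simp: bas_def)
  finally show ?case .
qed

lemma cl_top_bas: "cl_top m = bas {1..m}"
  unfolding cl_top_def using foldr_gen[of 1 m] by simp

lemma card_pr_top: "2 * card (pr {1..m} {1..m}) = m * (m - 1)"
proof (induction m)
  case 0 thus ?case unfolding pr_def by simp
next
  case (Suc m)
  have eq: "pr {1..Suc m} {1..Suc m} = pr {1..m} {1..m} \<union> (\<lambda>j. (Suc m, j)) ` {1..m}"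
    unfolding pr_def by auto
  have d: "pr {1..m} {1..m} \<inter> (\<lambda>j. (Suc m, j)) ` {1..m} = {}" unfolding pr_def by auto
  have "card (pr {1..Suc m} {1..Suc m}) = card (pr {1..m} {1..m}) + card ((\<lambda>j. (Suc m, j)) ` {1..m})"
    unfolding eq by (rule card_Un_disjoint) (simp_all add: finite_pr, auto simp: pr_def)
  also have "card ((\<lambda>j. (Suc m, j)) ` {1..m}) = m" by (subst card_image) (auto simp: inj_on_def)
  finally show ?case using Suc by (cases m) (auto simp: algebra_simps)
qed

lemma top_sq: "cl_mul (cl_top (n+1)) (cl_top (n+1)) = cl_scal ((-1 :: complex) ^ ((n + 1) * (n + 2) div 2))"
proof -
  define c where "c = card (pr {1..n+1} {1..n+1})"
  have h: "2 * c = (n+1) * n" using card_pr_top[of "n+1"] unfolding c_def by simp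
  have "(n+1)*(n+2) = 2 * (c + (n+1))" using h by (simp add: algebra_simps)
  hence ex: "(n + 1) * (n + 2) div 2 = c + (n+1)" by simp
  have sg: "cl_sign {1..n+1} {1..n+1} = (-1) ^ ((n + 1) * (n + 2) div 2)"
    unfolding cl_sign_pr ex c_def[symmetric] by (simp add: power_add)
  show ?thesis unfolding cl_top_bas bas_mul sg by (auto simp: sd_def cl_scal_def)
qed

lemma card_pr_sum:
  assumes "finite A" "finite B"
  shows "card (pr A B) + card (pr B A) + card (A \<inter> B) = card A * card B"
proof -
  have eq: "A \<times> B = (pr A B \<union> prod.swap ` pr B A) \<union> (\<lambda>x. (x, x)) ` (A \<inter> B)"
    unfolding pr_def by (auto simp: image_iff)
  have f: "finite (pr A B)" "finite (pr B A)" using assms finite_pr by auto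
  have "card (A \<times> B) = card (pr A B \<union> prod.swap ` pr B A) + card ((\<lambda>x. (x, x)) ` (A \<inter> B))"
    unfolding eq by (rule card_Un_disjoint) (use f assms in \<open>auto simp: pr_def\<close>)
  also have "card (pr A B \<union> prod.swap ` pr B A) = card (pr A B) + card (prod.swap ` pr B A)"
    by (rule card_Un_disjoint) (use f in \<open>auto simp: pr_def\<close>)
  also have "card (prod.swap ` pr B A) = card (pr B A)" by (rule card_image) simp
  also have "card ((\<lambda>x. (x, x)) ` (A \<inter> B)) = card (A \<inter> B)" by (rule card_image) (auto simp: inj_on_def)
  finally show ?thesis by (simp add: card_cartesian_product)
qed

lemma sign_comm_odd:
  assumes "finite A" "B \<subseteq> A" "odd (card A)"
  shows "cl_sign A B = cl_sign B A"
proof -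
  have fB: "finite B" using assms finite_subset by blast
  have AB: "A \<inter> B = B" "B \<inter> A = B" using assms by auto
  obtain k where k: "card A = 2 * k + 1" using assms oddE by blast
  have "card (pr A B) + card (pr B A) + card B = card A * card B"
    using card_pr_sum[OF assms(1) fB] AB by simp
  hence s: "card (pr A B) + card (pr B A) = 2 * (k * card B)" unfolding k by (simp add: algebra_simps)
  have "(-1::complex) ^ card (pr A B) = (-1) ^ card (pr A B) * (-1) ^ (card (pr A B) + card (pr B A))"
    unfolding s by (simp add: power_mult)
  also have "\<dots> = (-1) ^ (2 * card (pr A B)) * (-1) ^ card (pr B A)" by (simp add: power_add)
  also have "\<dots> = (-1) ^ card (pr B A)" by (simp add: power_mult)
  finally show ?thesis unfolding cl_sign_pr AB by simp
qed

lemma sd_comm: "sd A B = sd B A" unfolding sd_def by auto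

lemma bas_closed: "A \<subseteq> {1..M} \<Longrightarrow> cl_in M (bas A)" unfolding cl_in_def bas_def by auto

lemma top_central:
  assumes "odd M" "cl_in M b"
  shows "cl_mul (bas {1..M}) b = cl_mul b (bas {1..M})"
proof (rule ext)
  fix S
  define T where "T = sd {1..M} S"
  have "cl_mul (bas {1..M}) b S = (\<Sum>A\<in>Pow {1..M}. if A = {1..M} then cl_sign {1..M} T * b T else 0)"
    unfolding mul_formula[OF bas_closed[OF order_refl] assms(2)] T_def
    by (rule sum.cong) (auto simp: bas_def)
  also have "\<dots> = cl_sign {1..M} T * b T" by (simp add: sum.delta')
  finally have 1: "cl_mul (bas {1..M}) b S = cl_sign {1..M} T * b T" .
  have "cl_mul b (bas {1..M}) S = (\<Sum>A\<in>Pow {1..M}. if A = T then cl_sign T {1..M} * b T else 0)"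
    unfolding mul_formula[OF assms(2) bas_closed[OF order_refl]] T_def
    by (rule sum.cong) (auto simp: bas_def sd_def)
  also have "\<dots> = (if T \<in> Pow {1..M} then cl_sign T {1..M} * b T else 0)" by (simp add: sum.delta')
  finally have 2: "cl_mul b (bas {1..M}) S = (if T \<in> Pow {1..M} then cl_sign T {1..M} * b T else 0)" .
  show "cl_mul (bas {1..M}) b S = cl_mul b (bas {1..M}) S"
  proof (cases "T \<subseteq> {1..M}")
    case True
    thus ?thesis unfolding 1 2 using sign_comm_odd[of "{1..M}" T] assms by simp
  next
    case False
    thus ?thesis unfolding 1 2 using cl_in_out[OF assms(2) False] by simp
  qed
qed


definition central :: "nat \<Rightarrow> cl \<Rightarrow> bool" where
  "central M g \<longleftrightarrow> cl_in M g \<and> (\<forall>b. cl_in M b \<longrightarrow> cl_mul g b = cl_mul b g)"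

lemma centralD: "central M g \<Longrightarrow> cl_in M b \<Longrightarrow> cl_mul g b = cl_mul b g"
  unfolding central_def by blast
lemma central_in: "central M g \<Longrightarrow> cl_in M g"
  unfolding central_def by blast

lemma central_mul: assumes "central M g" "central M h" shows "central M (cl_mul g h)"
  unfolding central_def
proof (intro conjI allI impI)
  have g: "cl_in M g" and h: "cl_in M h" using assms central_in by auto
  show "cl_in M (cl_mul g h)" using mul_closed[OF g h] .
  fix b assume b: "cl_in M b"
  have "cl_mul (cl_mul g h) b = cl_mul g (cl_mul h b)" using mul_assoc[OF g h b] .
  also have "\<dots> = cl_mul g (cl_mul b h)" using centralD[OF assms(2) b] by simp
  also have "\<dots> = cl_mul (cl_mul g b) h" using mul_assoc[OF g b h] by simp
  also have "\<dots> = cl_mul (cl_mul b g) h" using centralD[OF assms(1) b] by simp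
  also have "\<dots> = cl_mul b (cl_mul g h)" using mul_assoc[OF b g h] .
  finally show "cl_mul (cl_mul g h) b = cl_mul b (cl_mul g h)" .
qed

lemma central_smul: assumes "central M g" shows "central M (cl_smul z g)"
  unfolding central_def
proof (intro conjI allI impI)
  have g: "cl_in M g" using assms central_in by auto
  show "cl_in M (cl_smul z g)" using smul_closed[OF g] .
  fix b assume b: "cl_in M b"
  show "cl_mul (cl_smul z g) b = cl_mul b (cl_smul z g)"
    using mul_smul_left[OF g b] mul_smul_right[OF b g] centralD[OF assms b] by simp
qed

lemma central_add: assumes "central M g" "central M h" shows "central M (g + h)"
  unfolding central_def
proof (intro conjI allI impI)
  have g: "cl_in M g" and h: "cl_in M h" using assms central_in by auto
  show "cl_in M (g + h)" using add_closed[OF g h] .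
  fix b assume b: "cl_in M b"
  show "cl_mul (g + h) b = cl_mul b (g + h)"
    using mul_add_left[OF g h b] mul_add_right[OF b g h] centralD[OF assms(1) b] centralD[OF assms(2) b] by simp
qed

lemma central_scal: "central M (cl_scal z)"
  unfolding central_def using mul_scal_left mul_scal_right scal_closed by metis

definition Lf :: "cl \<Rightarrow> complex \<Rightarrow> complex \<Rightarrow> cl" where
  "Lf e x y = cl_scal x + cl_smul y e"

lemma L_central: "central M e \<Longrightarrow> central M (Lf e x y)"
  unfolding Lf_def by (intro central_add central_scal central_smul)

lemma L_mul:
  assumes ce: "central M e" and ee: "cl_mul e e = cl_scal r"
  shows "cl_mul (Lf e x y) (Lf e x' y') = Lf e (x*x' + r*y*y') (x*y' + y*x')"
proof -
  have e: "cl_in M e" using ce central_in by auto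
  have L: "cl_in M (Lf e x' y')" using L_central[OF ce] central_in by blast
  have "cl_mul (Lf e x y) (Lf e x' y') = cl_mul (cl_scal x) (Lf e x' y') + cl_mul (cl_smul y e) (Lf e x' y')"
    unfolding Lf_def[of e x y] by (rule mul_add_left[OF scal_closed smul_closed[OF e] L])
  also have "\<dots> = cl_smul x (Lf e x' y') + cl_smul y (cl_mul e (Lf e x' y'))"
    using mul_scal_left[OF L] mul_smul_left[OF e L] by simp
  also have "cl_mul e (Lf e x' y') = cl_mul e (cl_scal x') + cl_mul e (cl_smul y' e)"
    unfolding Lf_def by (rule mul_add_right[OF e scal_closed smul_closed[OF e]])
  also have "\<dots> = cl_smul x' e + cl_smul y' (cl_scal r)"
    using mul_scal_right[OF e] mul_smul_right[OF e e] ee by simp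
  finally have h: "cl_mul (Lf e x y) (Lf e x' y') = cl_smul x (Lf e x' y') + cl_smul y (cl_smul x' e + cl_smul y' (cl_scal r))" .
  show ?thesis unfolding h unfolding Lf_def
    by (auto simp: fun_eq_iff cl_smul_def cl_scal_def algebra_simps)
qed

lemma L_smul: "cl_smul z (Lf e x y) = Lf e (z*x) (z*y)"
  unfolding Lf_def by (auto simp: fun_eq_iff cl_smul_def cl_scal_def algebra_simps)
lemma L_add: "Lf e x y + Lf e x' y' = Lf e (x + x') (y + y')"
  unfolding Lf_def by (auto simp: fun_eq_iff cl_smul_def cl_scal_def algebra_simps)
lemma L_diff: "Lf e x y - Lf e x' y' = Lf e (x - x') (y - y')"
  unfolding Lf_def by (auto simp: fun_eq_iff cl_smul_def cl_scal_def algebra_simps)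
lemma L_scal: "cl_scal x = Lf e x 0"
  unfolding Lf_def by (auto simp: fun_eq_iff cl_smul_def cl_scal_def algebra_simps)
lemma L_zero: "0 = Lf e 0 0"
  unfolding Lf_def by (auto simp: fun_eq_iff cl_smul_def cl_scal_def algebra_simps)
lemma L_eqI: "x = x' \<Longrightarrow> y = y' \<Longrightarrow> Lf e x y = Lf e x' y'" by simp

lemma mat_mul_eq: "mat_mul K A B i j = (\<Sum>k<K. cl_mul (A i k) (B k j))"
  unfolding mat_mul_def by (simp add: fun_eq_iff fun_sum_apply)

lemma diag_right:
  assumes "k < K" "\<And>l. l < K \<Longrightarrow> l \<noteq> k \<Longrightarrow> D l k = 0"
  shows "mat_mul K X D i k = cl_mul (X i k) (D k k)"
proof -
  have "mat_mul K X D i k = (\<Sum>l<K. if l = k then cl_mul (X i k) (D k k) else 0)"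
    unfolding mat_mul_eq by (rule sum.cong) (auto simp: assms(2))
  also have "\<dots> = cl_mul (X i k) (D k k)" using assms(1) by (simp add: sum.delta')
  finally show ?thesis .
qed

lemma term_central:
  assumes al: "central M \<alpha>" and be: "central M \<beta>" and a: "cl_in M a" and x: "cl_in M x" and b: "cl_in M b"
  shows "cl_mul (cl_mul (cl_mul \<alpha> a) x) (cl_mul \<beta> b) = cl_mul (cl_mul (cl_mul a x) b) (cl_mul \<alpha> \<beta>)"
proof -
  have A: "cl_in M \<alpha>" and B: "cl_in M \<beta>" using al be central_in by auto
  have ab: "central M (cl_mul \<alpha> \<beta>)" using central_mul[OF al be] .
  have AB: "cl_in M (cl_mul \<alpha> \<beta>)" using ab central_in by auto
  have ax: "cl_in M (cl_mul a x)" using mul_closed[OF a x] .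
  have "cl_mul (cl_mul \<alpha> a) x = cl_mul (cl_mul a \<alpha>) x" using centralD[OF al a] by simp
  also have "\<dots> = cl_mul a (cl_mul \<alpha> x)" using mul_assoc[OF a A x] .
  also have "\<dots> = cl_mul a (cl_mul x \<alpha>)" using centralD[OF al x] by simp
  also have "\<dots> = cl_mul (cl_mul a x) \<alpha>" using mul_assoc[OF a x A] by simp
  finally have 1: "cl_mul (cl_mul \<alpha> a) x = cl_mul (cl_mul a x) \<alpha>" .
  have "cl_mul (cl_mul (cl_mul a x) \<alpha>) (cl_mul \<beta> b) = cl_mul (cl_mul a x) (cl_mul \<alpha> (cl_mul \<beta> b))"
    using mul_assoc[OF ax A mul_closed[OF B b]] .
  also have "cl_mul \<alpha> (cl_mul \<beta> b) = cl_mul (cl_mul \<alpha> \<beta>) b" using mul_assoc[OF A B b] by simp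
  also have "\<dots> = cl_mul b (cl_mul \<alpha> \<beta>)" using centralD[OF ab b] .
  also have "cl_mul (cl_mul a x) (cl_mul b (cl_mul \<alpha> \<beta>)) = cl_mul (cl_mul (cl_mul a x) b) (cl_mul \<alpha> \<beta>)"
    using mul_assoc[OF ax b AB] by simp
  finally show ?thesis unfolding 1 .
qed

lemma term_central2:
  assumes al: "central M \<alpha>" and be: "central M \<beta>" and a: "cl_in M a" and b: "cl_in M b"
  shows "cl_mul (cl_mul \<alpha> a) (cl_mul \<beta> b) = cl_mul (cl_mul a b) (cl_mul \<alpha> \<beta>)"
proof -
  have A: "cl_in M \<alpha>" and B: "cl_in M \<beta>" using al be central_in by auto
  have ab: "central M (cl_mul \<alpha> \<beta>)" using central_mul[OF al be] .
  have AB: "cl_in M (cl_mul \<alpha> \<beta>)" using ab central_in by auto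
  have "cl_mul (cl_mul \<alpha> a) (cl_mul \<beta> b) = cl_mul (cl_mul a \<alpha>) (cl_mul \<beta> b)" using centralD[OF al a] by simp
  also have "\<dots> = cl_mul a (cl_mul \<alpha> (cl_mul \<beta> b))" using mul_assoc[OF a A mul_closed[OF B b]] .
  also have "cl_mul \<alpha> (cl_mul \<beta> b) = cl_mul (cl_mul \<alpha> \<beta>) b" using mul_assoc[OF A B b] by simp
  also have "\<dots> = cl_mul b (cl_mul \<alpha> \<beta>)" using centralD[OF ab b] .
  also have "cl_mul a (cl_mul b (cl_mul \<alpha> \<beta>)) = cl_mul (cl_mul a b) (cl_mul \<alpha> \<beta>)"
    using mul_assoc[OF a b AB] by simp
  finally show ?thesis .
qed

definition bf :: "nat \<Rightarrow> clmat \<Rightarrow> clmat \<Rightarrow> cl \<Rightarrow> cl \<Rightarrow> cl \<Rightarrow> cl \<Rightarrow> bool" where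
  "bf N X A a1 a2 a3 a4 \<longleftrightarrow> (\<forall>i<N. \<forall>k<N. X i k = cl_mul a1 (A i k) \<and> X i (k+N) = cl_mul a2 (A i k)
       \<and> X (i+N) k = cl_mul a3 (A i k) \<and> X (i+N) (k+N) = cl_mul a4 (A i k))"

lemma mat_over_entry: "mat_over M N A \<Longrightarrow> i < N \<Longrightarrow> j < N \<Longrightarrow> cl_in M (A i j)"
  unfolding mat_over_def by blast

lemma tri_entry:
  assumes a1: "central M \<alpha>1" and a2: "central M \<alpha>2" and b1: "central M \<beta>1" and b2: "central M \<beta>2"
    and x1: "cl_in M x1" and x2: "cl_in M x2" and A: "mat_over M N A" and B: "mat_over M N B"
    and hX: "\<And>k. k < N \<Longrightarrow> X i k = cl_mul \<alpha>1 (A i' k) \<and> X i (k+N) = cl_mul \<alpha>2 (A i' k)"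
    and hY: "\<And>k. k < N \<Longrightarrow> Y k j = cl_mul \<beta>1 (B k j') \<and> Y (k+N) j = cl_mul \<beta>2 (B k j')"
    and i': "i' < N" and j': "j' < N"
  shows "mat_mul (2*N) (mat_mul (2*N) X (mat_block N (mat_diag_const x1) mat_zero mat_zero (mat_diag_const x2))) Y i j
     = cl_mul (mat_mul N (mat_mul N A (mat_diag_const x1)) B i' j') (cl_mul \<alpha>1 \<beta>1)
     + cl_mul (mat_mul N (mat_mul N A (mat_diag_const x2)) B i' j') (cl_mul \<alpha>2 \<beta>2)"
proof -
  define D where "D = mat_block N (mat_diag_const x1) mat_zero mat_zero (mat_diag_const x2)"
  have Dz: "D l k = 0" if "l < 2*N" "l \<noteq> k" for l k
    using that unfolding D_def mat_block_def mat_diag_const_def mat_zero_def cl_zero_eq by auto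
  have D1: "D k k = x1" if "k < N" for k using that unfolding D_def mat_block_def mat_diag_const_def by auto
  have D2: "D (k+N) (k+N) = x2" for k unfolding D_def mat_block_def mat_diag_const_def by auto
  have phi: "mat_mul N (mat_mul N A (mat_diag_const x)) B i' j' = (\<Sum>k<N. cl_mul (cl_mul (A i' k) x) (B k j'))" for x
    unfolding mat_mul_eq[of N "mat_mul N A (mat_diag_const x)"]
    by (rule sum.cong[OF refl], subst diag_right) (auto simp: mat_diag_const_def cl_zero_eq)
  have "mat_mul (2*N) (mat_mul (2*N) X D) Y i j = (\<Sum>k<2*N. cl_mul (cl_mul (X i k) (D k k)) (Y k j))"
    unfolding mat_mul_eq[of "2*N" "mat_mul (2*N) X D"]
    by (rule sum.cong[OF refl], subst diag_right[where K="2*N"]) (use Dz in auto)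
  also have "\<dots> = (\<Sum>k<N+N. cl_mul (cl_mul (X i k) (D k k)) (Y k j))" by (simp only: mult_2)
  also have "\<dots> = (\<Sum>k<N. cl_mul (cl_mul (X i k) (D k k)) (Y k j)) + (\<Sum>k<N. cl_mul (cl_mul (X i (k+N)) (D (k+N) (k+N))) (Y (k+N) j))"
    by (rule sum_lessThan_add_split)
  also have "(\<Sum>k<N. cl_mul (cl_mul (X i k) (D k k)) (Y k j)) = (\<Sum>k<N. cl_mul (cl_mul (cl_mul \<alpha>1 (A i' k)) x1) (cl_mul \<beta>1 (B k j')))"
    by (rule sum.cong) (auto simp: hX hY D1)
  also have "\<dots> = (\<Sum>k<N. cl_mul (cl_mul (cl_mul (A i' k) x1) (B k j')) (cl_mul \<alpha>1 \<beta>1))"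
    by (rule sum.cong[OF refl], rule term_central[OF a1 b1 _ x1]) (auto intro: mat_over_entry[OF A] mat_over_entry[OF B] i' j')
  also have "\<dots> = cl_mul (mat_mul N (mat_mul N A (mat_diag_const x1)) B i' j') (cl_mul \<alpha>1 \<beta>1)"
    unfolding phi
    by (rule mul_sum_left[symmetric], rule central_in[OF central_mul[OF a1 b1]])
       (auto intro!: mul_closed x1 mat_over_entry[OF A] mat_over_entry[OF B] i' j')
  also have "(\<Sum>k<N. cl_mul (cl_mul (X i (k+N)) (D (k+N) (k+N))) (Y (k+N) j)) = (\<Sum>k<N. cl_mul (cl_mul (cl_mul \<alpha>2 (A i' k)) x2) (cl_mul \<beta>2 (B k j')))"
    by (rule sum.cong) (auto simp: hX hY D2)
  also have "\<dots> = (\<Sum>k<N. cl_mul (cl_mul (cl_mul (A i' k) x2) (B k j')) (cl_mul \<alpha>2 \<beta>2))"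
    by (rule sum.cong[OF refl], rule term_central[OF a2 b2 _ x2]) (auto intro: mat_over_entry[OF A] mat_over_entry[OF B] i' j')
  also have "\<dots> = cl_mul (mat_mul N (mat_mul N A (mat_diag_const x2)) B i' j') (cl_mul \<alpha>2 \<beta>2)"
    unfolding phi
    by (rule mul_sum_left[symmetric], rule central_in[OF central_mul[OF a2 b2]])
       (auto intro!: mul_closed x2 mat_over_entry[OF A] mat_over_entry[OF B] i' j')
  finally show ?thesis unfolding D_def .
qed

lemma bi_entry:
  assumes a1: "central M \<alpha>1" and a2: "central M \<alpha>2" and b1: "central M \<beta>1" and b2: "central M \<beta>2"
    and A: "mat_over M N A" and B: "mat_over M N B"
    and hX: "\<And>k. k < N \<Longrightarrow> X i k = cl_mul \<alpha>1 (A i' k) \<and> X i (k+N) = cl_mul \<alpha>2 (A i' k)"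
    and hY: "\<And>k. k < N \<Longrightarrow> Y k j = cl_mul \<beta>1 (B k j') \<and> Y (k+N) j = cl_mul \<beta>2 (B k j')"
    and i': "i' < N" and j': "j' < N"
  shows "mat_mul (2*N) X Y i j
     = cl_mul (mat_mul N A B i' j') (cl_mul \<alpha>1 \<beta>1) + cl_mul (mat_mul N A B i' j') (cl_mul \<alpha>2 \<beta>2)"
proof -
  have "mat_mul (2*N) X Y i j = (\<Sum>k<N+N. cl_mul (X i k) (Y k j))"
    unfolding mat_mul_eq mult_2 ..
  also have "\<dots> = (\<Sum>k<N. cl_mul (X i k) (Y k j)) + (\<Sum>k<N. cl_mul (X i (k+N)) (Y (k+N) j))"
    by (rule sum_lessThan_add_split)
  also have "(\<Sum>k<N. cl_mul (X i k) (Y k j)) = (\<Sum>k<N. cl_mul (cl_mul \<alpha>1 (A i' k)) (cl_mul \<beta>1 (B k j')))"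
    by (rule sum.cong) (auto simp: hX hY)
  also have "\<dots> = (\<Sum>k<N. cl_mul (cl_mul (A i' k) (B k j')) (cl_mul \<alpha>1 \<beta>1))"
    by (rule sum.cong[OF refl], rule term_central2[OF a1 b1]) (auto intro: mat_over_entry[OF A] mat_over_entry[OF B] i' j')
  also have "\<dots> = cl_mul (mat_mul N A B i' j') (cl_mul \<alpha>1 \<beta>1)"
    unfolding mat_mul_eq[of N A B]
    by (rule mul_sum_left[symmetric], rule central_in[OF central_mul[OF a1 b1]])
       (auto intro!: mul_closed mat_over_entry[OF A] mat_over_entry[OF B] i' j')
  also have "(\<Sum>k<N. cl_mul (X i (k+N)) (Y (k+N) j)) = (\<Sum>k<N. cl_mul (cl_mul \<alpha>2 (A i' k)) (cl_mul \<beta>2 (B k j')))"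
    by (rule sum.cong) (auto simp: hX hY)
  also have "\<dots> = (\<Sum>k<N. cl_mul (cl_mul (A i' k) (B k j')) (cl_mul \<alpha>2 \<beta>2))"
    by (rule sum.cong[OF refl], rule term_central2[OF a2 b2]) (auto intro: mat_over_entry[OF A] mat_over_entry[OF B] i' j')
  also have "\<dots> = cl_mul (mat_mul N A B i' j') (cl_mul \<alpha>2 \<beta>2)"
    unfolding mat_mul_eq[of N A B]
    by (rule mul_sum_left[symmetric], rule central_in[OF central_mul[OF a2 b2]])
       (auto intro!: mul_closed mat_over_entry[OF A] mat_over_entry[OF B] i' j')
  finally show ?thesis .
qed


lemma tri_block:
  assumes a1: "central M a1" and a2: "central M a2" and a3: "central M a3" and a4: "central M a4"
    and b1: "central M b1" and b2: "central M b2" and b3: "central M b3" and b4: "central M b4"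
    and x1: "cl_in M x1" and x2: "cl_in M x2" and A: "mat_over M N A" and B: "mat_over M N B"
    and X: "bf N X A a1 a2 a3 a4" and Y: "bf N Y B b1 b2 b3 b4"
  shows "mat_eq (2*N) (mat_mul (2*N) (mat_mul (2*N) X (mat_block N (mat_diag_const x1) mat_zero mat_zero (mat_diag_const x2))) Y)
     (mat_block N
       (\<lambda>i j. cl_mul (mat_mul N (mat_mul N A (mat_diag_const x1)) B i j) (cl_mul a1 b1)
            + cl_mul (mat_mul N (mat_mul N A (mat_diag_const x2)) B i j) (cl_mul a2 b3))
       (\<lambda>i j. cl_mul (mat_mul N (mat_mul N A (mat_diag_const x1)) B i j) (cl_mul a1 b2)
            + cl_mul (mat_mul N (mat_mul N A (mat_diag_const x2)) B i j) (cl_mul a2 b4))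
       (\<lambda>i j. cl_mul (mat_mul N (mat_mul N A (mat_diag_const x1)) B i j) (cl_mul a3 b1)
            + cl_mul (mat_mul N (mat_mul N A (mat_diag_const x2)) B i j) (cl_mul a4 b3))
       (\<lambda>i j. cl_mul (mat_mul N (mat_mul N A (mat_diag_const x1)) B i j) (cl_mul a3 b2)
            + cl_mul (mat_mul N (mat_mul N A (mat_diag_const x2)) B i j) (cl_mul a4 b4)))"
  (is "mat_eq _ ?L ?R")
  unfolding mat_eq_def
proof (intro allI impI)
  fix i j assume i: "i < 2*N" and j: "j < 2*N"
  have Xr: "\<And>k. k < N \<Longrightarrow> X i' k = cl_mul a1 (A i' k) \<and> X i' (k+N) = cl_mul a2 (A i' k)"
    "\<And>k. k < N \<Longrightarrow> X (i'+N) k = cl_mul a3 (A i' k) \<and> X (i'+N) (k+N) = cl_mul a4 (A i' k)"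
    if "i' < N" for i' using X that unfolding bf_def by auto
  have Yc: "\<And>k. k < N \<Longrightarrow> Y k j' = cl_mul b1 (B k j') \<and> Y (k+N) j' = cl_mul b3 (B k j')"
    "\<And>k. k < N \<Longrightarrow> Y k (j'+N) = cl_mul b2 (B k j') \<and> Y (k+N) (j'+N) = cl_mul b4 (B k j')"
    if "j' < N" for j' using Y that unfolding bf_def by auto
  consider (LL) "i < N" "j < N" | (LR) "i < N" "\<not> j < N" | (RL) "\<not> i < N" "j < N" | (RR) "\<not> i < N" "\<not> j < N" by blast
  thus "?L i j = ?R i j"
  proof cases
    case LL thus ?thesis
      by (subst tri_entry[OF a1 a2 b1 b3 x1 x2 A B, of X i i Y j j]) (use Xr(1) Yc(1) in \<open>auto simp: mat_block_def\<close>)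
  next
    case LR
    then obtain j' where j': "j = j' + N" "j' < N" using j by (metis add.commute le_add_diff_inverse mult_2 nat_add_left_cancel_less not_less)
    show ?thesis unfolding j'(1)
      by (subst tri_entry[OF a1 a2 b2 b4 x1 x2 A B, of X i i Y "j'+N" j']) (use Xr(1) Yc(2) LR j' in \<open>auto simp: mat_block_def\<close>)
  next
    case RL
    then obtain i' where i': "i = i' + N" "i' < N" using i by (metis add.commute le_add_diff_inverse mult_2 nat_add_left_cancel_less not_less)
    show ?thesis unfolding i'(1)
      by (subst tri_entry[OF a3 a4 b1 b3 x1 x2 A B, of X "i'+N" i' Y j j]) (use Xr(2) Yc(1) RL i' in \<open>auto simp: mat_block_def\<close>)
  next
    case RR
    then obtain i' where i': "i = i' + N" "i' < N" using i by (metis add.commute le_add_diff_inverse mult_2 nat_add_left_cancel_less not_less)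
    obtain j' where j': "j = j' + N" "j' < N" using j RR by (metis add.commute le_add_diff_inverse mult_2 nat_add_left_cancel_less not_less)
    show ?thesis unfolding i'(1) j'(1)
      by (subst tri_entry[OF a3 a4 b2 b4 x1 x2 A B, of X "i'+N" i' Y "j'+N" j']) (use Xr(2) Yc(2) i' j' in \<open>auto simp: mat_block_def\<close>)
  qed
qed

lemma bi_block:
  assumes a1: "central M a1" and a2: "central M a2" and a3: "central M a3" and a4: "central M a4"
    and b1: "central M b1" and b2: "central M b2" and b3: "central M b3" and b4: "central M b4"
    and A: "mat_over M N A" and B: "mat_over M N B"
    and X: "bf N X A a1 a2 a3 a4" and Y: "bf N Y B b1 b2 b3 b4"
  shows "mat_eq (2*N) (mat_mul (2*N) X Y)
     (mat_block N
       (\<lambda>i j. cl_mul (mat_mul N A B i j) (cl_mul a1 b1)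
            + cl_mul (mat_mul N A B i j) (cl_mul a2 b3))
       (\<lambda>i j. cl_mul (mat_mul N A B i j) (cl_mul a1 b2)
            + cl_mul (mat_mul N A B i j) (cl_mul a2 b4))
       (\<lambda>i j. cl_mul (mat_mul N A B i j) (cl_mul a3 b1)
            + cl_mul (mat_mul N A B i j) (cl_mul a4 b3))
       (\<lambda>i j. cl_mul (mat_mul N A B i j) (cl_mul a3 b2)
            + cl_mul (mat_mul N A B i j) (cl_mul a4 b4)))"
  (is "mat_eq _ ?L ?R")
  unfolding mat_eq_def
proof (intro allI impI)
  fix i j assume i: "i < 2*N" and j: "j < 2*N"
  have Xr: "\<And>k. k < N \<Longrightarrow> X i' k = cl_mul a1 (A i' k) \<and> X i' (k+N) = cl_mul a2 (A i' k)"
    "\<And>k. k < N \<Longrightarrow> X (i'+N) k = cl_mul a3 (A i' k) \<and> X (i'+N) (k+N) = cl_mul a4 (A i' k)"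
    if "i' < N" for i' using X that unfolding bf_def by auto
  have Yc: "\<And>k. k < N \<Longrightarrow> Y k j' = cl_mul b1 (B k j') \<and> Y (k+N) j' = cl_mul b3 (B k j')"
    "\<And>k. k < N \<Longrightarrow> Y k (j'+N) = cl_mul b2 (B k j') \<and> Y (k+N) (j'+N) = cl_mul b4 (B k j')"
    if "j' < N" for j' using Y that unfolding bf_def by auto
  consider (LL) "i < N" "j < N" | (LR) "i < N" "\<not> j < N" | (RL) "\<not> i < N" "j < N" | (RR) "\<not> i < N" "\<not> j < N" by blast
  thus "?L i j = ?R i j"
  proof cases
    case LL thus ?thesis
      by (subst bi_entry[OF a1 a2 b1 b3 A B, of X i i Y j j]) (use Xr(1) Yc(1) in \<open>auto simp: mat_block_def\<close>)
  next
    case LR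
    then obtain j' where j': "j = j' + N" "j' < N" using j by (metis add.commute le_add_diff_inverse mult_2 nat_add_left_cancel_less not_less)
    show ?thesis unfolding j'(1)
      by (subst bi_entry[OF a1 a2 b2 b4 A B, of X i i Y "j'+N" j']) (use Xr(1) Yc(2) LR j' in \<open>auto simp: mat_block_def\<close>)
  next
    case RL
    then obtain i' where i': "i = i' + N" "i' < N" using i by (metis add.commute le_add_diff_inverse mult_2 nat_add_left_cancel_less not_less)
    show ?thesis unfolding i'(1)
      by (subst bi_entry[OF a3 a4 b1 b3 A B, of X "i'+N" i' Y j j]) (use Xr(2) Yc(1) RL i' in \<open>auto simp: mat_block_def\<close>)
  next
    case RR
    then obtain i' where i': "i = i' + N" "i' < N" using i by (metis add.commute le_add_diff_inverse mult_2 nat_add_left_cancel_less not_less)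
    obtain j' where j': "j = j' + N" "j' < N" using j RR by (metis add.commute le_add_diff_inverse mult_2 nat_add_left_cancel_less not_less)
    show ?thesis unfolding i'(1) j'(1)
      by (subst bi_entry[OF a3 a4 b2 b4 A B, of X "i'+N" i' Y "j'+N" j']) (use Xr(2) Yc(2) i' j' in \<open>auto simp: mat_block_def\<close>)
  qed
qed



lemma smul_neg: "cl_smul z (- x) = cl_smul (- z) x"
  unfolding cl_smul_def by auto

lemma one_mul: "cl_in M b \<Longrightarrow> cl_mul cl_one b = b"
  unfolding cl_one_def by (simp add: mul_scal_left cl_smul_def)

lemma mat_eq_trans: "mat_eq K A B \<Longrightarrow> mat_eq K B C \<Longrightarrow> mat_eq K A C"
  unfolding mat_eq_def by auto

lemma block_eq:
  assumes "\<And>i j. i < N \<Longrightarrow> j < N \<Longrightarrow> F11 i j = T11 i j"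
    "\<And>i j. i < N \<Longrightarrow> j < N \<Longrightarrow> F12 i j = T12 i j"
    "\<And>i j. i < N \<Longrightarrow> j < N \<Longrightarrow> F21 i j = T21 i j"
    "\<And>i j. i < N \<Longrightarrow> j < N \<Longrightarrow> F22 i j = T22 i j"
  shows "mat_eq (2*N) (mat_block N F11 F12 F21 F22) (mat_block N T11 T12 T21 T22)"
  unfolding mat_eq_def mat_block_def using assms by auto

lemma block_id:
  assumes G: "mat_eq N G mat_id" and c: "cl_in M c1" "cl_in M c2" "cl_in M c3" "cl_in M c4"
     "cl_in M c5" "cl_in M c6" "cl_in M c7" "cl_in M c8"
    and s: "c1 + c2 = cl_one" "c3 + c4 = 0" "c5 + c6 = 0" "c7 + c8 = cl_one"
  shows "mat_eq (2*N) (mat_block N (\<lambda>i j. cl_mul (G i j) c1 + cl_mul (G i j) c2)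
     (\<lambda>i j. cl_mul (G i j) c3 + cl_mul (G i j) c4) (\<lambda>i j. cl_mul (G i j) c5 + cl_mul (G i j) c6)
     (\<lambda>i j. cl_mul (G i j) c7 + cl_mul (G i j) c8)) mat_id"
proof -
  have Gin: "cl_in M (G i j)" if "i < N" "j < N" for i j
    using G that unfolding mat_eq_def mat_id_def mat_diag_const_def cl_one_def cl_zero_def
    by (auto simp: scal_closed)
  have comb: "cl_mul (G i j) ca + cl_mul (G i j) cb = cl_mul (G i j) (ca + cb)"
    if "i < N" "j < N" "cl_in M ca" "cl_in M cb" for i j ca cb
    using mul_add_right[OF Gin[OF that(1,2)] that(3,4)] by simp
  have Gv: "G i j = (if i = j then cl_one else 0)" if "i < N" "j < N" for i j
    using G that unfolding mat_eq_def mat_id_def mat_diag_const_def cl_zero_eq by auto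
  have one: "cl_in M cl_one" unfolding cl_one_def by (rule scal_closed)
  show ?thesis
    unfolding mat_eq_def
  proof (intro allI impI)
    fix i j assume i: "i < 2*N" and j: "j < 2*N"
    show "mat_block N (\<lambda>i j. cl_mul (G i j) c1 + cl_mul (G i j) c2)
     (\<lambda>i j. cl_mul (G i j) c3 + cl_mul (G i j) c4) (\<lambda>i j. cl_mul (G i j) c5 + cl_mul (G i j) c6)
     (\<lambda>i j. cl_mul (G i j) c7 + cl_mul (G i j) c8) i j = mat_id i j"
      using i j unfolding mat_block_def mat_id_def mat_diag_const_def cl_zero_eq
      by (auto simp: c s Gv one_mul[OF c(1)] one_mul[OF c(2)] one_mul[OF c(3)] one_mul[OF c(4)] one_mul[OF c(5)] one_mul[OF c(6)] one_mul[OF c(7)] one_mul[OF c(8)])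
  qed
qed

lemma smul_mul_c: "central M g \<Longrightarrow> cl_in M p \<Longrightarrow> cl_mul (cl_smul z g) p = cl_smul z (cl_mul p g)"
  using mul_smul_left[of M g p z] centralD[of M g p] central_in[of M g] by simp

lemma phi_sum:
  assumes "j < N"
  shows "mat_mul N (mat_mul N A (mat_diag_const x)) B i j = (\<Sum>k<N. cl_mul (cl_mul (A i k) x) (B k j))"
  unfolding mat_mul_eq[of N "mat_mul N A (mat_diag_const x)"]
  by (rule sum.cong[OF refl], subst diag_right) (auto simp: mat_diag_const_def cl_zero_eq)

lemma phi_split:
  assumes ce: "central M e" and A: "mat_over M N A" and B: "mat_over M N B"
    and a0: "cl_in M a0" and a1: "cl_in M a1" and i: "i < N" and j: "j < N"
  shows "mat_mul N (mat_mul N A (mat_diag_const (a0 + cl_mul a1 e))) B i j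
      = mat_mul N (mat_mul N A (mat_diag_const a0)) B i j + cl_mul (mat_mul N (mat_mul N A (mat_diag_const a1)) B i j) e"
    and "mat_mul N (mat_mul N A (mat_diag_const (a0 - cl_mul a1 e))) B i j
      = mat_mul N (mat_mul N A (mat_diag_const a0)) B i j - cl_mul (mat_mul N (mat_mul N A (mat_diag_const a1)) B i j) e"
proof -
  have e: "cl_in M e" using ce central_in by auto
  have t: "cl_mul (cl_mul p (cl_mul a1 e)) q = cl_mul (cl_mul (cl_mul p a1) q) e"
    if p: "cl_in M p" and q: "cl_in M q" for p q
  proof -
    have pa: "cl_in M (cl_mul p a1)" using mul_closed[OF p a1] .
    have "cl_mul p (cl_mul a1 e) = cl_mul (cl_mul p a1) e" using mul_assoc[OF p a1 e] by simp
    hence "cl_mul (cl_mul p (cl_mul a1 e)) q = cl_mul (cl_mul p a1) (cl_mul e q)" using mul_assoc[OF pa e q] by simp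
    also have "\<dots> = cl_mul (cl_mul p a1) (cl_mul q e)" using centralD[OF ce q] by simp
    also have "\<dots> = cl_mul (cl_mul (cl_mul p a1) q) e" using mul_assoc[OF pa q e] by simp
    finally show ?thesis .
  qed
  have Ain: "cl_in M (A i k)" if "k < N" for k using mat_over_entry[OF A i that] .
  have Bin: "cl_in M (B k j)" if "k < N" for k using mat_over_entry[OF B that j] .
  have a1e: "cl_in M (cl_mul a1 e)" using mul_closed[OF a1 e] .
  have se: "(\<Sum>k<N. cl_mul (cl_mul (cl_mul (A i k) a1) (B k j)) e) = cl_mul (\<Sum>k<N. cl_mul (cl_mul (A i k) a1) (B k j)) e"
    by (rule mul_sum_left[symmetric, OF e]) (auto intro: mul_closed Ain Bin a1)
  have "(\<Sum>k<N. cl_mul (cl_mul (A i k) (a0 + cl_mul a1 e)) (B k j))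
      = (\<Sum>k<N. cl_mul (cl_mul (A i k) a0) (B k j) + cl_mul (cl_mul (cl_mul (A i k) a1) (B k j)) e)"
  proof (rule sum.cong[OF refl])
    fix k assume "k \<in> {..<N}" hence k: "k < N" by simp
    show "cl_mul (cl_mul (A i k) (a0 + cl_mul a1 e)) (B k j) = cl_mul (cl_mul (A i k) a0) (B k j) + cl_mul (cl_mul (cl_mul (A i k) a1) (B k j)) e"
      using mul_add_right[OF Ain[OF k] a0 a1e] mul_add_left[OF mul_closed[OF Ain[OF k] a0] mul_closed[OF Ain[OF k] a1e] Bin[OF k]]
        t[OF Ain[OF k] Bin[OF k]] by simp
  qed
  also have "\<dots> = (\<Sum>k<N. cl_mul (cl_mul (A i k) a0) (B k j)) + cl_mul (\<Sum>k<N. cl_mul (cl_mul (A i k) a1) (B k j)) e"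
    by (simp add: sum.distrib se)
  finally show "mat_mul N (mat_mul N A (mat_diag_const (a0 + cl_mul a1 e))) B i j
      = mat_mul N (mat_mul N A (mat_diag_const a0)) B i j + cl_mul (mat_mul N (mat_mul N A (mat_diag_const a1)) B i j) e"
    unfolding phi_sum[OF j] .
  have "(\<Sum>k<N. cl_mul (cl_mul (A i k) (a0 - cl_mul a1 e)) (B k j))
      = (\<Sum>k<N. cl_mul (cl_mul (A i k) a0) (B k j) - cl_mul (cl_mul (cl_mul (A i k) a1) (B k j)) e)"
  proof (rule sum.cong[OF refl])
    fix k assume "k \<in> {..<N}" hence k: "k < N" by simp
    show "cl_mul (cl_mul (A i k) (a0 - cl_mul a1 e)) (B k j) = cl_mul (cl_mul (A i k) a0) (B k j) - cl_mul (cl_mul (cl_mul (A i k) a1) (B k j)) e"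
      using mul_diff_right[OF Ain[OF k] a0 a1e] mul_diff_left[OF mul_closed[OF Ain[OF k] a0] mul_closed[OF Ain[OF k] a1e] Bin[OF k]]
        t[OF Ain[OF k] Bin[OF k]] by simp
  qed
  also have "\<dots> = (\<Sum>k<N. cl_mul (cl_mul (A i k) a0) (B k j)) - cl_mul (\<Sum>k<N. cl_mul (cl_mul (A i k) a1) (B k j)) e"
    by (simp add: sum_subtractf se)
  finally show "mat_mul N (mat_mul N A (mat_diag_const (a0 - cl_mul a1 e))) B i j
      = mat_mul N (mat_mul N A (mat_diag_const a0)) B i j - cl_mul (mat_mul N (mat_mul N A (mat_diag_const a1)) B i j) e"
    unfolding phi_sum[OF j] .
qed

theorem theorem14:
  fixes n :: nat and P Q :: clmat and sr :: complex
  defines "N \<equiv> 2 ^ (n div 2)"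
    and "e \<equiv> cl_top (n + 1)"
    and "r \<equiv> (-1 :: complex) ^ ((n + 1) * (n + 2) div 2)"
  assumes n_even: "even n"
    and P_over: "mat_over n N P" and Q_over: "mat_over n N Q"
    and PQ: "mat_eq N (mat_mul N P Q) mat_id"
    and QP: "mat_eq N (mat_mul N Q P) mat_id"
    and phi_scalar: "\<forall>a. cl_in n a \<longrightarrow>
        (\<forall>i<N. \<forall>j<N. cl_is_scalar (mat_mul N (mat_mul N P (mat_diag_const a)) Q i j))"
    and sr: "sr ^ 2 = r"
  shows
   "let phi = (\<lambda>a. mat_mul N (mat_mul N P (mat_diag_const a)) Q);
        u = cl_add cl_one (cl_smul (1 / sr) e);
        v = cl_minus (cl_scal sr) e;
        Pn1 = mat_smul (1/2) (mat_block N
                 (mat_lmul u P) (mat_neg (mat_lmul v P))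
                 (mat_lmul (cl_smul (1 / r) v) P) (mat_lmul u P));
        Pn1' = mat_smul (1/2) (mat_block N
                 (mat_rmul Q u) (mat_rmul Q v)
                 (mat_neg (mat_rmul Q (cl_smul (1 / r) v))) (mat_rmul Q u))
    in cl_mul e e = cl_scal r
     \<and> (\<forall>a. cl_in (n + 1) a \<longrightarrow>
          (\<exists>a0 a1. cl_in n a0 \<and> cl_in n a1 \<and>
              a = cl_add a0 (cl_mul a1 e) \<and> a = cl_add a0 (cl_mul e a1)))
     \<and> mat_eq (2 * N) (mat_mul (2 * N) Pn1 Pn1') mat_id
     \<and> mat_eq (2 * N) (mat_mul (2 * N) Pn1' Pn1) mat_id
     \<and> (\<forall>a a0 a1. cl_in n a0 \<and> cl_in n a1 \<and> a = cl_add a0 (cl_mul a1 e) \<longrightarrow>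
          mat_eq (2 * N)
            (mat_mul (2 * N) (mat_mul (2 * N) Pn1
               (mat_block N (mat_diag_const a) mat_zero mat_zero
                            (mat_diag_const (cl_minus a0 (cl_mul a1 e))))) Pn1')
            (mat_block N (mat_add (phi a0) (mat_smul sr (phi a1))) mat_zero
                         mat_zero (mat_minus (phi a0) (mat_smul sr (phi a1)))))"
proof -
  define M where "M = n + 1"
  have eM: "e = bas {1..M}" unfolding e_def M_def by (rule cl_top_bas)
  have oddM: "odd M" using n_even M_def by simp
  have ein: "cl_in M e" unfolding eM by (rule bas_closed) simp
  have ce: "central M e" unfolding central_def using ein top_central[OF oddM] eM by auto
  have ee: "cl_mul e e = cl_scal r" unfolding e_def r_def by (rule top_sq)
  have r_sr: "r = sr^2" using sr by simp
  have r_ne: "r \<noteq> 0" unfolding r_def by simp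
  have sr_ne: "sr \<noteq> 0" using r_ne r_sr by auto
  have PM: "mat_over M N P" using P_over cl_in_mono unfolding mat_over_def M_def by fastforce
  have QM: "mat_over M N Q" using Q_over cl_in_mono unfolding mat_over_def M_def by fastforce
  define u where "u = cl_add cl_one (cl_smul (1 / sr) e)"
  define v where "v = cl_minus (cl_scal sr) e"
  define w where "w = cl_smul (1 / r) v"
  have uL: "u = Lf e 1 (1/sr)" unfolding u_def Lf_def cl_add_eq cl_one_def ..
  have vL: "v = Lf e sr (-1)" unfolding v_def Lf_def cl_minus_eq by (auto simp: fun_eq_iff cl_smul_def)
  have wL: "w = Lf e (sr/r) (-1/r)" unfolding w_def vL L_smul by simp
  have cu: "central M u" unfolding uL by (rule L_central[OF ce])
  have cv: "central M v" unfolding vL by (rule L_central[OF ce])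
  have cw: "central M w" unfolding wL by (rule L_central[OF ce])
  have uin: "cl_in M u" and vin: "cl_in M v" and win: "cl_in M w" using cu cv cw central_in by auto
  define Pn1 where "Pn1 = mat_smul (1/2) (mat_block N
                 (mat_lmul u P) (mat_neg (mat_lmul v P))
                 (mat_lmul w P) (mat_lmul u P))"
  define Pn1' where "Pn1' = mat_smul (1/2) (mat_block N
                 (mat_rmul Q u) (mat_rmul Q v)
                 (mat_neg (mat_rmul Q w)) (mat_rmul Q u))"
  have bfP: "bf N Pn1 P (cl_smul (1/2) u) (cl_smul (-(1/2)) v) (cl_smul (1/2) w) (cl_smul (1/2) u)"
    unfolding bf_def Pn1_def
    by (auto simp: mat_smul_def mat_block_def mat_lmul_def mat_neg_def cl_neg_eq smul_neg
        mul_smul_left[OF uin mat_over_entry[OF PM]] mul_smul_left[OF vin mat_over_entry[OF PM]]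
        mul_smul_left[OF win mat_over_entry[OF PM]])
  have bfQ: "bf N Pn1' Q (cl_smul (1/2) u) (cl_smul (1/2) v) (cl_smul (-(1/2)) w) (cl_smul (1/2) u)"
    unfolding bf_def Pn1'_def
    by (auto simp: mat_smul_def mat_block_def mat_rmul_def mat_neg_def cl_neg_eq smul_neg
        smul_mul_c[OF cu mat_over_entry[OF QM]] smul_mul_c[OF cv mat_over_entry[OF QM]]
        smul_mul_c[OF cw mat_over_entry[OF QM]])
  have hu: "central M (cl_smul z u)" for z using central_smul[OF cu] .
  have hv: "central M (cl_smul z v)" for z using central_smul[OF cv] .
  have hw: "central M (cl_smul z w)" for z using central_smul[OF cw] .
  note Ls = uL vL wL L_smul L_mul[OF ce ee] L_add L_diff
  show ?thesis unfolding Let_def u_def[symmetric] v_def[symmetric] w_def[symmetric]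
    Pn1_def[symmetric] Pn1'_def[symmetric]
  proof (intro conjI)
    show "cl_mul e e = cl_scal r" by (rule ee)
  next
    show "mat_eq (2 * N) (mat_mul (2 * N) Pn1 Pn1') mat_id"
      apply (rule mat_eq_trans[OF bi_block[OF hu hv hw hu hu hv hw hu PM QM bfP bfQ]])
      apply (rule block_id[OF PQ, where M=M])
      apply (simp_all add: mul_closed central_in hu hv hw)
      apply (simp_all add: Ls cl_one_def L_scal[where e=e] L_zero[where e=e])
      apply (auto intro!: L_eqI simp: sr_ne r_sr field_simps power2_eq_square)
      done
  next
    show "mat_eq (2 * N) (mat_mul (2 * N) Pn1' Pn1) mat_id"
      apply (rule mat_eq_trans[OF bi_block[OF hu hv hw hu hu hv hw hu QM PM bfQ bfP]])
      apply (rule block_id[OF QP, where M=M])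
      apply (simp_all add: mul_closed central_in hu hv hw)
      apply (simp_all add: Ls cl_one_def L_scal[where e=e] L_zero[where e=e])
      apply (auto intro!: L_eqI simp: sr_ne r_sr field_simps power2_eq_square)
      done
  next
    show "\<forall>a. cl_in (n + 1) a \<longrightarrow>
          (\<exists>a0 a1. cl_in n a0 \<and> cl_in n a1 \<and>
              a = cl_add a0 (cl_mul a1 e) \<and> a = cl_add a0 (cl_mul e a1))"
    proof (intro allI impI)
      fix a assume a: "cl_in (n + 1) a"
      hence aM: "cl_in M a" unfolding M_def .
      define a0 where "a0 = (\<lambda>S. if M \<in> S then 0 else a S)"
      define a1 where "a1 = cl_smul (1/r) (cl_mul (a - a0) e)"
      have a0n: "cl_in n a0"
        unfolding cl_in_def
      proof (intro allI impI)
        fix S assume "a0 S \<noteq> 0"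
        hence S1: "M \<notin> S" "a S \<noteq> 0" unfolding a0_def by (auto split: if_splits)
        hence S2: "S \<subseteq> {1..M}" using aM cl_in_def by blast
        show "S \<subseteq> {1..n}"
        proof
          fix x assume "x \<in> S"
          hence "1 \<le> x" "x \<le> n + 1" "x \<noteq> n + 1" using S1 S2 M_def by auto
          thus "x \<in> {1..n}" by simp
        qed
      qed
      have a0M: "cl_in M a0" using cl_in_mono[OF a0n] M_def by simp
      have dM: "cl_in M (a - a0)" using diff_closed[OF aM a0M] .
      have a1n: "cl_in n a1"
        unfolding cl_in_def
      proof (intro allI impI)
        fix S assume "a1 S \<noteq> 0"
        hence "cl_mul (a - a0) e S \<noteq> 0" unfolding a1_def cl_smul_def by auto
        then obtain A where A: "A \<in> Pow {1..M}" "cl_sign A (sd A S) * (a - a0) A * e (sd A S) \<noteq> 0"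
          unfolding mul_formula[OF dM ein] using sum.not_neutral_contains_not_neutral by blast
        have nz: "(a - a0) A \<noteq> 0" "e (sd A S) \<noteq> 0" using A(2) by auto
        have MA: "M \<in> A"
        proof (rule ccontr)
          assume "M \<notin> A" hence "(a - a0) A = 0" by (simp add: a0_def)
          thus False using nz by simp
        qed
        have "sd A S = {1..M}" using nz(2) by (simp add: eM bas_def split: if_splits)
        hence S: "S = sd A {1..M}" by (metis sd_sd)
        show "S \<subseteq> {1..n}"
        proof
          fix x assume "x \<in> S"
          hence x: "x \<in> {1..M}" "x \<notin> A" using A(1) unfolding S sd_def by auto
          hence "x \<noteq> M" using MA by auto
          thus "x \<in> {1..n}" using x(1) M_def by auto
        qed
      qed
      have a1M: "cl_in M a1" using cl_in_mono[OF a1n] M_def by simp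
      have "cl_mul a1 e = cl_smul (1/r) (cl_mul (cl_mul (a - a0) e) e)"
        unfolding a1_def by (rule mul_smul_left[OF mul_closed[OF dM ein] ein])
      also have "cl_mul (cl_mul (a - a0) e) e = cl_mul (a - a0) (cl_mul e e)" by (rule mul_assoc[OF dM ein ein])
      also have "\<dots> = cl_smul r (a - a0)" unfolding ee by (rule mul_scal_right[OF dM])
      finally have a1e: "cl_mul a1 e = a - a0" using r_ne by (auto simp: fun_eq_iff cl_smul_def)
      show "\<exists>a0 a1. cl_in n a0 \<and> cl_in n a1 \<and> a = cl_add a0 (cl_mul a1 e) \<and> a = cl_add a0 (cl_mul e a1)"
      proof (intro exI conjI)
        show "cl_in n a0" "cl_in n a1" by (fact a0n, fact a1n)
        show "a = cl_add a0 (cl_mul a1 e)" unfolding cl_add_eq a1e by simp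
        show "a = cl_add a0 (cl_mul e a1)" using centralD[OF ce a1M] a1e by (simp add: cl_add_eq)
      qed
    qed
  next
    show "\<forall>a a0 a1. cl_in n a0 \<and> cl_in n a1 \<and> a = cl_add a0 (cl_mul a1 e) \<longrightarrow>
          mat_eq (2 * N)
            (mat_mul (2 * N) (mat_mul (2 * N) Pn1
               (mat_block N (mat_diag_const a) mat_zero mat_zero
                            (mat_diag_const (cl_minus a0 (cl_mul a1 e))))) Pn1')
            (mat_block N (mat_add (mat_mul N (mat_mul N P (mat_diag_const a0)) Q) (mat_smul sr (mat_mul N (mat_mul N P (mat_diag_const a1)) Q))) mat_zero
                         mat_zero (mat_minus (mat_mul N (mat_mul N P (mat_diag_const a0)) Q) (mat_smul sr (mat_mul N (mat_mul N P (mat_diag_const a1)) Q))))"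
    proof (intro allI impI)
      fix a a0 a1 assume h: "cl_in n a0 \<and> cl_in n a1 \<and> a = cl_add a0 (cl_mul a1 e)"
      have a0M: "cl_in M a0" using h cl_in_mono M_def by auto
      have a1M: "cl_in M a1" using h cl_in_mono M_def by auto
      have aeq: "a = a0 + cl_mul a1 e" using h cl_add_eq by simp
      have aM: "cl_in M a" unfolding aeq by (intro add_closed mul_closed a0M a1M ein)
      have abM: "cl_in M (a0 - cl_mul a1 e)" by (intro diff_closed mul_closed a0M a1M ein)
      have key: "\<exists>z0 z1. mat_mul N (mat_mul N P (mat_diag_const a)) Q i j = Lf e z0 z1
          \<and> mat_mul N (mat_mul N P (mat_diag_const (a0 - cl_mul a1 e))) Q i j = Lf e z0 (-z1)
          \<and> mat_mul N (mat_mul N P (mat_diag_const a0)) Q i j = cl_scal z0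
          \<and> mat_mul N (mat_mul N P (mat_diag_const a1)) Q i j = cl_scal z1"
        if i: "i < N" and j: "j < N" for i j
      proof -
        obtain z0 where z0: "mat_mul N (mat_mul N P (mat_diag_const a0)) Q i j = cl_scal z0"
          using phi_scalar h i j unfolding cl_is_scalar_def by blast
        obtain z1 where z1: "mat_mul N (mat_mul N P (mat_diag_const a1)) Q i j = cl_scal z1"
          using phi_scalar h i j unfolding cl_is_scalar_def by blast
        show ?thesis
          apply (rule exI[of _ z0], rule exI[of _ z1])
          unfolding aeq phi_split[OF ce PM QM a0M a1M i j] z0 z1 mul_scal_left[OF ein]
          by (auto simp: Lf_def fun_eq_iff cl_smul_def cl_scal_def)
      qed
      have smul_scal: "cl_smul z (cl_scal x) = cl_scal (z * x)" for z x
        by (auto simp: fun_eq_iff cl_smul_def cl_scal_def)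
      show "mat_eq (2 * N)
            (mat_mul (2 * N) (mat_mul (2 * N) Pn1
               (mat_block N (mat_diag_const a) mat_zero mat_zero
                            (mat_diag_const (cl_minus a0 (cl_mul a1 e))))) Pn1')
            (mat_block N (mat_add (mat_mul N (mat_mul N P (mat_diag_const a0)) Q) (mat_smul sr (mat_mul N (mat_mul N P (mat_diag_const a1)) Q))) mat_zero
                         mat_zero (mat_minus (mat_mul N (mat_mul N P (mat_diag_const a0)) Q) (mat_smul sr (mat_mul N (mat_mul N P (mat_diag_const a1)) Q))))"
        unfolding cl_minus_eq
        apply (rule mat_eq_trans[OF tri_block[OF hu hv hw hu hu hv hw hu aM abM PM QM bfP bfQ]])
        apply (rule block_eq)
        subgoal premises pr for i j using key[OF pr] apply (elim exE conjE)
          apply (simp add: mat_add_def mat_minus_def mat_smul_def mat_zero_def cl_zero_eq cl_add_eq cl_minus_eq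
              smul_scal Ls L_scal[where e=e] L_zero[where e=e])
          by (auto intro!: L_eqI simp: sr_ne r_sr field_simps power2_eq_square)
        subgoal premises pr for i j using key[OF pr] apply (elim exE conjE)
          apply (simp add: mat_add_def mat_minus_def mat_smul_def mat_zero_def cl_zero_eq cl_add_eq cl_minus_eq
              smul_scal Ls L_scal[where e=e] L_zero[where e=e])
          by (auto intro!: L_eqI simp: sr_ne r_sr field_simps power2_eq_square)
        subgoal premises pr for i j using key[OF pr] apply (elim exE conjE)
          apply (simp add: mat_add_def mat_minus_def mat_smul_def mat_zero_def cl_zero_eq cl_add_eq cl_minus_eq
              smul_scal Ls L_scal[where e=e] L_zero[where e=e])
          by (auto intro!: L_eqI simp: sr_ne r_sr field_simps power2_eq_square)
        subgoal premises pr for i j using key[OF pr] apply (elim exE conjE)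
          apply (simp add: mat_add_def mat_minus_def mat_smul_def mat_zero_def cl_zero_eq cl_add_eq cl_minus_eq
              smul_scal Ls L_scal[where e=e] L_zero[where e=e])
          by (auto intro!: L_eqI simp: sr_ne r_sr field_simps power2_eq_square)
        done
    qed
  qed
qed

end
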